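(* Let $\alpha\in(0,1)$ and let $\{a_n\}$ be a positive sequence. Suppose there exists $\delta>0$ such that for all $\epsilon>0$ and $\tilde\alpha\in[\alpha-\delta,\alpha+\delta]$, $$\sup_{P\in\mathbf P_0}P\big(c_{n,1-\tilde\alpha}(P)-\epsilon\le I_n\le c_{n,1-\tilde\alpha}(P)+\epsilon\big)\le a_n^{-1}(\epsilon\wedge1)+o(1).$$ (i) If $I_n\le U_{n,P}+o_p(a_n)$ and $\hat U_n\ge U^\star_{n,P}+o_p(a_n)$ uniformly in $P\in\mathbf P_0$, for some $U^\star_{n,P}$ independent of $\{V_i\}_{i=1}^n$ and equal in distribution to $U_{n,P}$, then $\limsup_{n\to\infty}\sup_{P\in\mathbf P_0}P(I_n>\hat c_{n,1-\alpha})\le\alpha$. (ii) If $I_n=U_{n,P}+o_p(a_n)$ and $\hat U_n=U^\star_{n,P}+o_p(a_n)$ uniformly in $P\in\mathbf P_0$, for some $U^\star_{n,P}$ independent of $\{V_i\}_{i=1}^n$ and equal in distribution to $U_{n,P}$, then $\limsup_{n\to\infty}\sup_{P\in\mathbf P_0}|P(I_n>\hat c_{n,1-\alpha})-\alpha|=0$.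
   Context: Data $\{V_i\}_{i=1}^n$ are i.i.d. with law $P$ in a family $\mathbf P_0$; all random variables are defined on a common (possibly enlarged) probability space. $I_n$ is a real statistic computed from the data, $\hat U_n$ a real random variable depending on the data and possibly on auxiliary randomness, and $U_{n,P}$, $U^\star_{n,P}$ real random variables. $c_{n,1-\alpha}(P)\equiv\inf\{u:P(I_n\le u)\ge1-\alpha\}$ and $\hat c_{n,1-\alpha}\equiv\inf\{u:P(\hat U_n\le u\mid\{V_i\}_{i=1}^n)\ge1-\alpha\}$. $X_n=o_p(b_n)$ uniformly in $P\in\mathbf P_0$ means that for every $\epsilon>0$, $\limsup_n\sup_{P\in\mathbf P_0}P(|X_n|>\epsilon b_n)=0$. *)

theory Defs
  imports "HOL-Probability.Probability"
begin

(* Sample space: \<Omega> = (nat \<Rightarrow> 'v) \<times> 'a.  First component: the data sequence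
   V_1, V_2, ... (stored at indices 0,1,...), i.i.d. with law P.
   Second component: auxiliary randomness, independent of the data. *)

definition dataM :: "'v measure \<Rightarrow> (nat \<Rightarrow> 'v) measure" where
  "dataM P = (\<Pi>\<^sub>M i\<in>UNIV. P)"

definition jointM :: "'v measure \<Rightarrow> 'a measure \<Rightarrow> ((nat \<Rightarrow> 'v) \<times> 'a) measure" where
  "jointM P A = dataM P \<Otimes>\<^sub>M A"

definition quantile :: "(real \<Rightarrow> real) \<Rightarrow> real \<Rightarrow> real" where
  "quantile F \<beta> = Inf {u. \<beta> \<le> F u}"

definition crit :: "((nat \<Rightarrow> 'v) \<times> 'a) measure \<Rightarrow> ((nat \<Rightarrow> 'v) \<Rightarrow> real) \<Rightarrow> real \<Rightarrow> real" where
  "crit M In \<beta> = quantile (\<lambda>u. measure M {\<omega> \<in> space M. In (fst \<omega>) \<le> u}) \<beta>"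

(* \<hat>c_{n,\<beta>} = inf{u : P(\<hat>U_n \<le> u | data) \<ge> \<beta>}, the conditional probability given the
   data being the probability over the (independent) auxiliary randomness *)
definition boot_crit :: "'a measure \<Rightarrow> ((nat \<Rightarrow> 'v) \<Rightarrow> 'a \<Rightarrow> real) \<Rightarrow> real \<Rightarrow> (nat \<Rightarrow> 'v) \<Rightarrow> real" where
  "boot_crit A Uh \<beta> d = quantile (\<lambda>u. measure A {x \<in> space A. Uh d x \<le> u}) \<beta>"

definition unif_op :: "'p set \<Rightarrow> ('p \<Rightarrow> 'w measure) \<Rightarrow> (nat \<Rightarrow> 'p \<Rightarrow> 'w \<Rightarrow> real) \<Rightarrow> (nat \<Rightarrow> real) \<Rightarrow> bool" where
  "unif_op P0 M X b \<longleftrightarrow>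
     (\<forall>n. \<forall>P\<in>P0. X n P \<in> borel_measurable (M P)) \<and>
     (\<forall>\<epsilon>>0. \<forall>\<eta>>0. eventually (\<lambda>n. \<forall>P\<in>P0.
          measure (M P) {\<omega> \<in> space (M P). \<bar>X n P \<omega>\<bar> > \<epsilon> * b n} \<le> \<eta>) sequentially)"

definition valid_copy :: "'v measure set \<Rightarrow> ('v measure \<Rightarrow> ((nat \<Rightarrow> 'v) \<times> 'a) measure) \<Rightarrow> 'v measure
     \<Rightarrow> (nat \<Rightarrow> 'v measure \<Rightarrow> (nat \<Rightarrow> 'v) \<times> 'a \<Rightarrow> real)
     \<Rightarrow> (nat \<Rightarrow> 'v measure \<Rightarrow> (nat \<Rightarrow> 'v) \<times> 'a \<Rightarrow> real) \<Rightarrow> bool" where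
  "valid_copy P0 M Vsp U Us \<longleftrightarrow>
     (\<forall>n. \<forall>P\<in>P0. U n P \<in> borel_measurable (M P) \<and> Us n P \<in> borel_measurable (M P) \<and>
        distr (M P) borel (Us n P) = distr (M P) borel (U n P) \<and>
        prob_space.indep_set (M P)
            {Us n P -` B \<inter> space (M P) | B. B \<in> sets borel}
            {(\<lambda>\<omega>. restrict (fst \<omega>) {..<n}) -` C \<inter> space (M P) | C. C \<in> sets (\<Pi>\<^sub>M i\<in>{..<n}. Vsp)})"

end

theory Submission
  imports Defs
begin



lemma quantile_iff:
  fixes F :: "real \<Rightarrow> real"
  assumes mono: "mono F" and rc: "\<And>a. continuous (at_right a) F"
    and bot: "(F \<longlongrightarrow> 0) at_bot" and top: "(F \<longlongrightarrow> 1) at_top"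
    and b: "0 < \<beta>" "\<beta> < 1"
  shows "\<beta> \<le> F u \<longleftrightarrow> quantile F \<beta> \<le> u"
proof -
  let ?S = "{u. \<beta> \<le> F u}"
  have "eventually (\<lambda>x. F x > \<beta>) at_top"
    using top b by (intro order_tendstoD) auto
  then obtain x0 where x0: "\<And>x. x \<ge> x0 \<Longrightarrow> F x > \<beta>" by (auto simp: eventually_at_top_linorder)
  have ne: "?S \<noteq> {}" using x0[of x0] by (auto intro: less_imp_le)
  have "eventually (\<lambda>x. F x < \<beta>) at_bot"
    using bot b by (intro order_tendstoD) auto
  then obtain x1 where x1: "\<And>x. x \<le> x1 \<Longrightarrow> F x < \<beta>" by (auto simp: eventually_at_bot_linorder)
  have bdd: "bdd_below ?S"
    by (rule bdd_belowI[of _ x1]) (metis linorder_not_le mem_Collect_eq x1 less_le_not_le)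
  show ?thesis
  proof
    assume "\<beta> \<le> F u" then show "quantile F \<beta> \<le> u"
      unfolding quantile_def by (intro cInf_lower bdd) auto
  next
    assume qu: "quantile F \<beta> \<le> u"
    let ?q = "quantile F \<beta>"
    have ev: "eventually (\<lambda>x. \<beta> \<le> F x) (at_right ?q)"
      unfolding eventually_at_right_field
    proof (intro exI[of _ "?q + 1"] conjI allI impI)
      fix x assume "?q < x" "x < ?q + 1"
      then have "Inf ?S < x" unfolding quantile_def by auto
      then obtain s where "s \<in> ?S" "s < x" using cInf_less_iff[OF ne bdd] by auto
      then show "\<beta> \<le> F x" using mono unfolding mono_def by (meson dual_order.trans less_imp_le mem_Collect_eq)
    qed simp
    have "(F \<longlongrightarrow> F ?q) (at_right ?q)" using rc[of ?q] by (simp add: continuous_within)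
    then have "\<beta> \<le> F ?q" by (rule tendsto_lowerbound[OF _ ev]) simp
    then show "\<beta> \<le> F u" using mono qu unfolding mono_def by (meson order_trans)
  qed
qed

lemma (in prob_space) cdf_quantile_iff:
  assumes X: "X \<in> borel_measurable M" and b: "0 < \<beta>" "\<beta> < 1"
  shows "\<beta> \<le> measure M {\<omega>\<in>space M. X \<omega> \<le> u} \<longleftrightarrow>
    quantile (\<lambda>u. measure M {\<omega>\<in>space M. X \<omega> \<le> u}) \<beta> \<le> u"
proof -
  interpret R: real_distribution "distr M borel X" using X by simp
  have eq: "(\<lambda>u. measure M {\<omega>\<in>space M. X \<omega> \<le> u}) = cdf (distr M borel X)"
  proof
    fix u show "measure M {\<omega>\<in>space M. X \<omega> \<le> u} = cdf (distr M borel X) u"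
      unfolding cdf_def using X by (subst measure_distr) (auto intro!: arg_cong[where f="measure M"])
  qed
  have "\<beta> \<le> cdf (distr M borel X) u \<longleftrightarrow> quantile (cdf (distr M borel X)) \<beta> \<le> u"
    by (rule quantile_iff[OF _ R.cdf_is_right_cont R.cdf_lim_at_bot _ b])
       (auto simp: mono_def R.cdf_nondecreasing intro: R.cdf_lim_at_top_prob)
  then show ?thesis using fun_cong[OF eq, of u] by (simp only: eq)
qed



lemma (in prob_space) prob_un_le:
  "A \<in> events \<Longrightarrow> B \<in> events \<Longrightarrow> prob (A \<union> B) \<le> prob A + prob B"
  by (rule measure_subadditive) auto

locale boot_setup =
  fixes P :: "'v measure" and Vsp :: "'v measure" and X :: "'a measure" and Asp :: "'a measure"
    and n :: nat and Uh :: "(nat \<Rightarrow> 'v) \<Rightarrow> 'a \<Rightarrow> real" and \<beta> :: real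
  assumes probP: "prob_space P" and setsP: "sets P = sets Vsp"
    and probX: "prob_space X" and setsX: "sets X = sets Asp"
    and Uh_meas: "(\<lambda>\<omega>. Uh (fst \<omega>) (snd \<omega>)) \<in> borel_measurable ((\<Pi>\<^sub>M i\<in>UNIV. Vsp) \<Otimes>\<^sub>M Asp)"
    and Uh_data: "\<forall>d d' x. (\<forall>i<n. d i = d' i) \<longrightarrow> Uh d x = Uh d' x"
    and beta: "0 < \<beta>" "\<beta> < 1"
begin

abbreviation "D \<equiv> dataM P"
abbreviation "M \<equiv> jointM P X"
definition "G d u = measure X {x \<in> space X. Uh d x \<le> u}"

lemma probD: "prob_space D"
  unfolding dataM_def using probP by (intro prob_space_PiM) auto

lemma probM: "prob_space M"
proof -
  interpret D: prob_space D by (rule probD)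
  interpret X: prob_space X by (rule probX)
  interpret pair_prob_space D X by unfold_locales
  show ?thesis unfolding jointM_def by (rule P.prob_space_axioms)
qed

lemma setsD: "sets D = sets (\<Pi>\<^sub>M i\<in>UNIV. Vsp)"
  unfolding dataM_def by (rule sets_PiM_cong) (auto simp: setsP)

lemma setsM: "sets M = sets ((\<Pi>\<^sub>M i\<in>UNIV. Vsp) \<Otimes>\<^sub>M Asp)"
  unfolding jointM_def by (rule sets_pair_measure_cong[OF setsD setsX])

lemma spaceD: "space D = space (\<Pi>\<^sub>M i\<in>UNIV. Vsp)"
  by (rule sets_eq_imp_space_eq[OF setsD])

lemma spaceM: "space M = space D \<times> space X"
  unfolding jointM_def by (simp add: space_pair_measure)

lemma Uh_measM: "(\<lambda>\<omega>. Uh (fst \<omega>) (snd \<omega>)) \<in> borel_measurable M"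
proof -
  have "measurable M (borel::real measure) = measurable ((\<Pi>\<^sub>M i\<in>UNIV. Vsp) \<Otimes>\<^sub>M Asp) borel"
    by (rule measurable_cong_sets[OF setsM refl])
  then show ?thesis using Uh_meas by simp
qed

lemma Uh_measX: "d \<in> space D \<Longrightarrow> Uh d \<in> borel_measurable X"
  using measurable_Pair2[OF Uh_measM[unfolded jointM_def], of d] by simp

lemma G_meas: "(\<lambda>d. G d u) \<in> borel_measurable D"
proof -
  interpret X: prob_space X by (rule probX)
  let ?Q = "{\<omega> \<in> space M. Uh (fst \<omega>) (snd \<omega>) \<le> u}"
  have Q: "?Q \<in> sets (D \<Otimes>\<^sub>M X)" unfolding jointM_def[symmetric] using Uh_measM by measurable
  have m: "(\<lambda>d. emeasure X (Pair d -` ?Q)) \<in> borel_measurable D"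
    by (rule X.measurable_emeasure_Pair[OF Q])
  have "(\<lambda>d. enn2real (emeasure X (Pair d -` ?Q))) \<in> borel_measurable D" using m by measurable
  moreover have "d \<in> space D \<Longrightarrow> enn2real (emeasure X (Pair d -` ?Q)) = G d u" for d
    unfolding G_def measure_def by (intro arg_cong[where f="\<lambda>S. enn2real (emeasure X S)"]) (auto simp: spaceM)
  ultimately show ?thesis by (simp cong: measurable_cong)
qed

lemma G_quantile: "d \<in> space D \<Longrightarrow> \<beta> \<le> G d u \<longleftrightarrow> boot_crit X Uh \<beta> d \<le> u"
  unfolding G_def boot_crit_def
  by (rule prob_space.cdf_quantile_iff[OF probX Uh_measX beta])

lemma chat_meas: "boot_crit X Uh \<beta> \<in> borel_measurable D"
  unfolding borel_measurable_iff_le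
proof
  fix t
  have "{d \<in> space D. boot_crit X Uh \<beta> d \<le> t} = {d \<in> space D. \<beta> \<le> G d t}"
    using G_quantile by auto
  also have "\<dots> \<in> sets D" using G_meas by measurable
  finally show "{d \<in> space D. boot_crit X Uh \<beta> d \<le> t} \<in> sets D" .
qed

lemma v0_ex: "\<exists>v0. v0 \<in> space Vsp"
  using prob_space.not_empty[OF probP] sets_eq_imp_space_eq[OF setsP] by auto

definition "v0 = (SOME v. v \<in> space Vsp)"
lemma v0: "v0 \<in> space Vsp" unfolding v0_def using v0_ex by (rule someI_ex)

definition "ext e = (\<lambda>i. if i < n then e i else v0)"

lemma ext_meas: "ext \<in> measurable (\<Pi>\<^sub>M i\<in>{..<n}. Vsp) D"
  unfolding ext_def dataM_def
proof (rule measurable_PiM_single')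
  fix i :: nat
  show "(\<lambda>e. if i < n then e i else v0) \<in> measurable (\<Pi>\<^sub>M i\<in>{..<n}. Vsp) P"
  proof (cases "i < n")
    case True
    have "(\<lambda>e. e i) \<in> measurable (\<Pi>\<^sub>M i\<in>{..<n}. Vsp) Vsp"
      using True by (intro measurable_component_singleton) auto
    moreover have "measurable (\<Pi>\<^sub>M i\<in>{..<n}. Vsp) P = measurable (\<Pi>\<^sub>M i\<in>{..<n}. Vsp) Vsp"
      by (rule measurable_cong_sets[OF refl setsP])
    ultimately show ?thesis using True by simp
  next
    case False
    have "v0 \<in> space P" using v0 sets_eq_imp_space_eq[OF setsP] by simp
    then show ?thesis using False by simp
  qed
next
  have "space P = space Vsp" using sets_eq_imp_space_eq[OF setsP] .
  then show "(\<lambda>\<omega> i. if i < n then \<omega> i else v0) \<in> space (\<Pi>\<^sub>M i\<in>{..<n}. Vsp) \<rightarrow> (\<Pi>\<^sub>E i\<in>UNIV. space P)"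
    using v0 by (auto simp: space_PiM PiE_iff)
qed

lemma G_ext: "G (ext (restrict d {..<n})) u = G d u"
proof -
  have "Uh (ext (restrict d {..<n})) x = Uh d x" for x
    using Uh_data by (auto simp: ext_def)
  then show ?thesis unfolding G_def by simp
qed

lemma Cset:
  assumes K: "K \<in> sets borel"
  shows "{\<omega> \<in> space M. G (fst \<omega>) u \<in> K} \<in>
     {(\<lambda>\<omega>. restrict (fst \<omega>) {..<n}) -` C \<inter> space M | C. C \<in> sets (\<Pi>\<^sub>M i\<in>{..<n}. Vsp)}"
proof -
  let ?C = "{e \<in> space (\<Pi>\<^sub>M i\<in>{..<n}. Vsp). G (ext e) u \<in> K}"
  have "(\<lambda>e. G (ext e) u) \<in> borel_measurable (\<Pi>\<^sub>M i\<in>{..<n}. Vsp)"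
    using measurable_comp[OF ext_meas G_meas] by (simp add: comp_def)
  then have C: "?C \<in> sets (\<Pi>\<^sub>M i\<in>{..<n}. Vsp)" using K by measurable
  have "restrict (fst \<omega>) {..<n} \<in> space (\<Pi>\<^sub>M i\<in>{..<n}. Vsp)" if "\<omega> \<in> space M" for \<omega>
    using that spaceD by (auto simp: spaceM space_PiM PiE_iff)
  then have "{\<omega> \<in> space M. G (fst \<omega>) u \<in> K} = (\<lambda>\<omega>. restrict (fst \<omega>) {..<n}) -` ?C \<inter> space M"
    using G_ext by auto
  then show ?thesis using C by blast
qed

lemma G_nonneg: "0 \<le> G d u" unfolding G_def by simp

lemma fubini_C:
  assumes K: "K \<in> sets borel"
  shows "emeasure M ({\<omega>\<in>space M. Uh (fst \<omega>) (snd \<omega>) \<le> u} \<inter> {\<omega>\<in>space M. G (fst \<omega>) u \<in> K})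
      = (\<integral>\<^sup>+d. indicator {d\<in>space D. G d u \<in> K} d * ennreal (G d u) \<partial>D)"
proof -
  interpret X: prob_space X by (rule probX)
  let ?S = "{\<omega>\<in>space M. Uh (fst \<omega>) (snd \<omega>) \<le> u} \<inter> {\<omega>\<in>space M. G (fst \<omega>) u \<in> K}"
  have gm: "(\<lambda>\<omega>. G (fst \<omega>) u) \<in> borel_measurable M"
    unfolding jointM_def using G_meas by measurable
  have S: "?S \<in> sets (D \<Otimes>\<^sub>M X)"
    unfolding jointM_def[symmetric] using Uh_measM gm K by measurable
  have "emeasure M ?S = (\<integral>\<^sup>+d. emeasure X (Pair d -` ?S) \<partial>D)"
    unfolding jointM_def by (rule X.emeasure_pair_measure_alt[OF S[unfolded jointM_def]])
  also have "\<dots> = (\<integral>\<^sup>+d. indicator {d\<in>space D. G d u \<in> K} d * ennreal (G d u) \<partial>D)"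
  proof (rule nn_integral_cong)
    fix d assume d: "d \<in> space D"
    have "Pair d -` ?S = (if G d u \<in> K then {x\<in>space X. Uh d x \<le> u} else {})"
      using d by (auto simp: spaceM)
    then show "emeasure X (Pair d -` ?S) = indicator {d\<in>space D. G d u \<in> K} d * ennreal (G d u)"
      using d by (simp add: G_def X.emeasure_eq_measure indicator_def)
  qed
  finally show ?thesis .
qed

lemma emeasure_C:
  assumes K: "K \<in> sets borel"
  shows "emeasure M {\<omega>\<in>space M. G (fst \<omega>) u \<in> K} = emeasure D {d\<in>space D. G d u \<in> K}"
proof -
  interpret X: prob_space X by (rule probX)
  have C: "{d\<in>space D. G d u \<in> K} \<in> sets D" using G_meas K by measurable
  have "{\<omega>\<in>space M. G (fst \<omega>) u \<in> K} = {d\<in>space D. G d u \<in> K} \<times> space X"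
    by (auto simp: spaceM)
  then show ?thesis unfolding jointM_def
    using X.emeasure_pair_measure_Times[OF C, of "space X"] by (simp add: X.emeasure_space_1)
qed

lemma key_upper:
  fixes Us :: "(nat \<Rightarrow> 'v) \<times> 'a \<Rightarrow> real" and t :: real
  assumes Us: "Us \<in> borel_measurable M"
    and indep: "prob_space.indep_set M {Us -` B \<inter> space M | B. B \<in> sets borel}
       {(\<lambda>\<omega>. restrict (fst \<omega>) {..<n}) -` C \<inter> space M | C. C \<in> sets (\<Pi>\<^sub>M i\<in>{..<n}. Vsp)}"
    and Bp: "B' \<in> sets M"
    and sub: "{\<omega>\<in>space M. Uh (fst \<omega>) (snd \<omega>) \<le> u} \<subseteq> {\<omega>\<in>space M. Us \<omega> \<le> t} \<union> B'"
    and nu: "0 < \<nu>"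
  shows "measure M {\<omega>\<in>space M. measure M {\<omega>\<in>space M. Us \<omega> \<le> t} + \<nu> < G (fst \<omega>) u} \<le> measure M B' / \<nu>"
proof -
  interpret prob_space M by (rule probM)
  define S where "S = {\<omega>\<in>space M. Us \<omega> \<le> t}"
  define p where "p = prob S"
  define K where "K = {p + \<nu><..}"
  define H where "H = {\<omega>\<in>space M. Uh (fst \<omega>) (snd \<omega>) \<le> u}"
  define Cw where "Cw = {\<omega>\<in>space M. G (fst \<omega>) u \<in> K}"
  define CD where "CD = {d\<in>space D. G d u \<in> K}"
  have K: "K \<in> sets borel" unfolding K_def by simp
  have gm: "(\<lambda>\<omega>. G (fst \<omega>) u) \<in> borel_measurable M"
    unfolding jointM_def using G_meas by measurable
  have Hm: "H \<in> events" unfolding H_def using Uh_measM by measurable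
  have Cm: "Cw \<in> events" unfolding Cw_def using gm K by measurable
  have CDm: "CD \<in> sets D" unfolding CD_def using G_meas K by measurable
  have Seq: "S = Us -` {..t} \<inter> space M" unfolding S_def by auto
  have Sm: "S \<in> events" unfolding Seq by (rule measurable_sets[OF Us atMost_borel])
  note Seq
  then have "S \<in> {Us -` B \<inter> space M | B. B \<in> sets borel}" using atMost_borel[of t] by blast
  then have h1: "prob (S \<inter> Cw) = p * prob Cw"
    unfolding p_def Cw_def by (rule indep_setD[OF indep _ Cset[OF K]])
  have "ennreal (p + \<nu>) * emeasure D CD = (\<integral>\<^sup>+d. ennreal (p + \<nu>) * indicator CD d \<partial>D)"
    using CDm by (simp add: nn_integral_cmult_indicator)
  also have "\<dots> \<le> (\<integral>\<^sup>+d. indicator CD d * ennreal (G d u) \<partial>D)"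
    by (intro nn_integral_mono) (auto simp: CD_def K_def indicator_def intro!: ennreal_leI)
  also have "\<dots> = emeasure M (H \<inter> Cw)"
    unfolding H_def Cw_def CD_def by (rule fubini_C[OF K, symmetric])
  finally have "ennreal (p + \<nu>) * emeasure M Cw \<le> emeasure M (H \<inter> Cw)"
    using emeasure_C[OF K] unfolding Cw_def CD_def by simp
  then have "ennreal ((p + \<nu>) * prob Cw) \<le> ennreal (prob (H \<inter> Cw))"
    using nu by (simp add: emeasure_eq_measure p_def ennreal_mult)
  then have h2: "(p + \<nu>) * prob Cw \<le> prob (H \<inter> Cw)"
    by (simp add: ennreal_le_iff)
  have "H \<inter> Cw \<subseteq> (S \<inter> Cw) \<union> B'" using sub unfolding H_def S_def Cw_def by auto
  then have "prob (H \<inter> Cw) \<le> prob ((S \<inter> Cw) \<union> B')"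
    using Sm Cm Bp by (intro finite_measure_mono) auto
  also have "\<dots> \<le> prob (S \<inter> Cw) + prob B'"
    using Sm Cm Bp by (intro prob_un_le) auto
  finally have "\<nu> * prob Cw \<le> prob B'" using h1 h2 by (simp add: algebra_simps)
  then have "prob Cw \<le> prob B' / \<nu>" using nu by (simp add: pos_le_divide_eq mult.commute)
  moreover have "Cw = {\<omega>\<in>space M. prob {\<omega>\<in>space M. Us \<omega> \<le> t} + \<nu> < G (fst \<omega>) u}"
    unfolding Cw_def K_def p_def S_def by auto
  ultimately show ?thesis by simp
qed

lemma key_lower:
  fixes Us :: "(nat \<Rightarrow> 'v) \<times> 'a \<Rightarrow> real" and t :: real
  assumes Us: "Us \<in> borel_measurable M"
    and indep: "prob_space.indep_set M {Us -` B \<inter> space M | B. B \<in> sets borel}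
       {(\<lambda>\<omega>. restrict (fst \<omega>) {..<n}) -` C \<inter> space M | C. C \<in> sets (\<Pi>\<^sub>M i\<in>{..<n}. Vsp)}"
    and Bp: "B' \<in> sets M"
    and sub: "{\<omega>\<in>space M. Us \<omega> \<le> t} \<subseteq> {\<omega>\<in>space M. Uh (fst \<omega>) (snd \<omega>) \<le> u} \<union> B'"
    and nu: "0 < \<nu>"
  shows "measure M {\<omega>\<in>space M. G (fst \<omega>) u < measure M {\<omega>\<in>space M. Us \<omega> \<le> t} - \<nu>} \<le> measure M B' / \<nu>"
proof -
  interpret prob_space M by (rule probM)
  define S where "S = {\<omega>\<in>space M. Us \<omega> \<le> t}"
  define p where "p = prob S"
  define K where "K = {..<p - \<nu>}"
  define H where "H = {\<omega>\<in>space M. Uh (fst \<omega>) (snd \<omega>) \<le> u}"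
  define Cw where "Cw = {\<omega>\<in>space M. G (fst \<omega>) u \<in> K}"
  define CD where "CD = {d\<in>space D. G d u \<in> K}"
  have K: "K \<in> sets borel" unfolding K_def by simp
  have gm: "(\<lambda>\<omega>. G (fst \<omega>) u) \<in> borel_measurable M"
    unfolding jointM_def using G_meas by measurable
  have Seq: "S = Us -` {..t} \<inter> space M" unfolding S_def by auto
  have Sm: "S \<in> events" unfolding Seq by (rule measurable_sets[OF Us atMost_borel])
  have Hm: "H \<in> events" unfolding H_def using Uh_measM by measurable
  have Cm: "Cw \<in> events" unfolding Cw_def using gm K by measurable
  have CDm: "CD \<in> sets D" unfolding CD_def using G_meas K by measurable
  have "S \<in> {Us -` B \<inter> space M | B. B \<in> sets borel}" using Seq atMost_borel[of t] by blast
  then have h1: "prob (S \<inter> Cw) = p * prob Cw"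
    unfolding p_def Cw_def by (rule indep_setD[OF indep _ Cset[OF K]])
  have h2: "prob (H \<inter> Cw) \<le> (p - \<nu>) * prob Cw"
  proof (cases "p - \<nu> < 0")
    case True
    have "\<not> G d u < p - \<nu>" for d using G_nonneg[of d u] True by linarith
    then have "Cw = {}" unfolding Cw_def K_def by auto
    then show ?thesis by simp
  next
    case False
    have "emeasure M (H \<inter> Cw) = (\<integral>\<^sup>+d. indicator CD d * ennreal (G d u) \<partial>D)"
      unfolding H_def Cw_def CD_def by (rule fubini_C[OF K])
    also have "\<dots> \<le> (\<integral>\<^sup>+d. ennreal (p - \<nu>) * indicator CD d \<partial>D)"
      by (intro nn_integral_mono) (auto simp: CD_def K_def indicator_def intro!: ennreal_leI)
    also have "\<dots> = ennreal (p - \<nu>) * emeasure D CD"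
      using CDm by (simp add: nn_integral_cmult_indicator)
    finally have "emeasure M (H \<inter> Cw) \<le> ennreal (p - \<nu>) * emeasure M Cw"
      using emeasure_C[OF K] unfolding Cw_def CD_def by simp
    then have "ennreal (prob (H \<inter> Cw)) \<le> ennreal ((p - \<nu>) * prob Cw)"
      using False by (simp add: emeasure_eq_measure ennreal_mult)
    then show ?thesis using False by (simp add: ennreal_le_iff)
  qed
  have "S \<inter> Cw \<subseteq> (H \<inter> Cw) \<union> B'" using sub unfolding H_def S_def Cw_def by auto
  then have "prob (S \<inter> Cw) \<le> prob ((H \<inter> Cw) \<union> B')"
    using Hm Cm Bp by (intro finite_measure_mono) auto
  also have "\<dots> \<le> prob (H \<inter> Cw) + prob B'"
    using Hm Cm Bp by (intro prob_un_le) auto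
  finally have "\<nu> * prob Cw \<le> prob B'" using h1 h2 by (simp add: algebra_simps)
  then have "prob Cw \<le> prob B' / \<nu>" using nu by (simp add: pos_le_divide_eq mult.commute)
  moreover have "Cw = {\<omega>\<in>space M. G (fst \<omega>) u < prob {\<omega>\<in>space M. Us \<omega> \<le> t} - \<nu>}"
    unfolding Cw_def K_def p_def S_def by auto
  ultimately show ?thesis by simp
qed

lemma In_measM:
  fixes In :: "(nat \<Rightarrow> 'v) \<Rightarrow> real"
  assumes "In \<in> borel_measurable (\<Pi>\<^sub>M i\<in>UNIV. Vsp)"
  shows "(\<lambda>\<omega>. In (fst \<omega>)) \<in> borel_measurable M"
proof -
  have "measurable D (borel::real measure) = measurable (\<Pi>\<^sub>M i\<in>UNIV. Vsp) borel"
    by (rule measurable_cong_sets[OF setsD refl])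
  then have "In \<in> borel_measurable D" using assms by simp
  then show ?thesis unfolding jointM_def by measurable
qed

lemma chat_measM: "(\<lambda>\<omega>. boot_crit X Uh \<beta> (fst \<omega>)) \<in> borel_measurable M"
  unfolding jointM_def using chat_meas by measurable

lemma distr_le:
  fixes U Us :: "(nat \<Rightarrow> 'v) \<times> 'a \<Rightarrow> real"
  assumes U: "U \<in> borel_measurable M" and Us: "Us \<in> borel_measurable M"
    and eq: "distr M borel Us = distr M borel U"
  shows "measure M {\<omega>\<in>space M. Us \<omega> \<le> t} = measure M {\<omega>\<in>space M. U \<omega> \<le> t}"
proof -
  have "measure M {\<omega>\<in>space M. Us \<omega> \<le> t} = measure (distr M borel Us) {..t}"
    using Us by (subst measure_distr) (auto intro!: arg_cong[where f="measure M"])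
  also have "\<dots> = measure (distr M borel U) {..t}" using eq by simp
  also have "\<dots> = measure M {\<omega>\<in>space M. U \<omega> \<le> t}"
    using U by (subst measure_distr) (auto intro!: arg_cong[where f="measure M"])
  finally show ?thesis .
qed

lemma upper_n:
  fixes In :: "(nat \<Rightarrow> 'v) \<Rightarrow> real" and U Us R R' :: "(nat \<Rightarrow> 'v) \<times> 'a \<Rightarrow> real"
  assumes In_meas: "In \<in> borel_measurable (\<Pi>\<^sub>M i\<in>UNIV. Vsp)"
    and U: "U \<in> borel_measurable M" and Us: "Us \<in> borel_measurable M"
    and R: "R \<in> borel_measurable M" and R': "R' \<in> borel_measurable M"
    and deq: "distr M borel Us = distr M borel U"
    and indep: "prob_space.indep_set M {Us -` B \<inter> space M | B. B \<in> sets borel}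
       {(\<lambda>\<omega>. restrict (fst \<omega>) {..<n}) -` C \<inter> space M | C. C \<in> sets (\<Pi>\<^sub>M i\<in>{..<n}. Vsp)}"
    and Ile: "\<forall>\<omega>\<in>space M. In (fst \<omega>) \<le> U \<omega> + R \<omega>"
    and Uge: "\<forall>\<omega>\<in>space M. Uh (fst \<omega>) (snd \<omega>) \<ge> Us \<omega> + R' \<omega>"
    and nu: "0 < \<nu>" and eps: "0 < \<epsilon>" and b1: "\<beta>1 = \<beta> - 2 * \<nu>" "0 < \<beta>1"
    and RB: "measure M {\<omega>\<in>space M. \<bar>R \<omega>\<bar> > \<epsilon>} \<le> \<nu>"
    and win: "measure M {\<omega>\<in>space M. crit M In \<beta>1 - 3 * \<epsilon> \<le> In (fst \<omega>) \<and>
                 In (fst \<omega>) \<le> crit M In \<beta>1 + 3 * \<epsilon>} \<le> w"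
  shows "measure M {\<omega>\<in>space M. In (fst \<omega>) > boot_crit X Uh \<beta> (fst \<omega>)}
          \<le> (1 - \<beta>1) + w + measure M {\<omega>\<in>space M. \<bar>R' \<omega>\<bar> > \<epsilon>} / \<nu>"
proof -
  interpret prob_space M by (rule probM)
  have Im: "(\<lambda>\<omega>. In (fst \<omega>)) \<in> borel_measurable M" by (rule In_measM[OF In_meas])
  have b1': "\<beta>1 < 1" using b1 beta nu by simp
  define FI where "FI u = prob {\<omega>\<in>space M. In (fst \<omega>) \<le> u}" for u
  define c where "c = crit M In \<beta>1"
  have qiff: "\<beta>1 \<le> FI u \<longleftrightarrow> c \<le> u" for u
    unfolding FI_def c_def crit_def
    by (rule cdf_quantile_iff[OF Im b1(2) b1'])
  have Fc: "\<beta>1 \<le> FI c" using qiff by simp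
  have Flt: "FI u < \<beta>1" if "u < c" for u using qiff[of u] that by linarith
  define u0 where "u0 = c - 3 * \<epsilon>"
  define t where "t = c - 2 * \<epsilon>"
  define p where "p = prob {\<omega>\<in>space M. Us \<omega> \<le> t}"
  define B where "B = {\<omega>\<in>space M. \<bar>R \<omega>\<bar> > \<epsilon>}"
  define B' where "B' = {\<omega>\<in>space M. \<bar>R' \<omega>\<bar> > \<epsilon>}"
  have Bm: "B \<in> events" unfolding B_def using R by measurable
  have B'm: "B' \<in> events" unfolding B'_def using R' by measurable
  have p_eq: "p = prob {\<omega>\<in>space M. U \<omega> \<le> t}" unfolding p_def by (rule distr_le[OF U Us deq])
  have "{\<omega>\<in>space M. U \<omega> \<le> t} \<subseteq> {\<omega>\<in>space M. In (fst \<omega>) \<le> c - \<epsilon>} \<union> B"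
    using Ile unfolding B_def t_def by force
  then have "p \<le> prob ({\<omega>\<in>space M. In (fst \<omega>) \<le> c - \<epsilon>} \<union> B)"
    unfolding p_eq using Bm Im by (intro finite_measure_mono) auto
  also have "\<dots> \<le> FI (c - \<epsilon>) + prob B"
    unfolding FI_def using Bm Im by (intro prob_un_le) auto
  finally have "p + \<nu> < \<beta>" using Flt[of "c - \<epsilon>"] eps RB b1 unfolding B_def by linarith
  have sub: "{\<omega>\<in>space M. Uh (fst \<omega>) (snd \<omega>) \<le> u0} \<subseteq> {\<omega>\<in>space M. Us \<omega> \<le> t} \<union> B'"
    using Uge unfolding B'_def u0_def t_def by force
  define Bad where "Bad = {\<omega>\<in>space M. p + \<nu> < G (fst \<omega>) u0}"
  have Bad: "prob Bad \<le> prob B' / \<nu>"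
    unfolding Bad_def p_def by (rule key_upper[OF Us indep B'm sub nu])
  have Badm: "Bad \<in> events" unfolding Bad_def using G_meas unfolding jointM_def by measurable
  define E where "E = {\<omega>\<in>space M. In (fst \<omega>) > boot_crit X Uh \<beta> (fst \<omega>)}"
  define W where "W = {\<omega>\<in>space M. crit M In \<beta>1 - 3 * \<epsilon> \<le> In (fst \<omega>) \<and>
                 In (fst \<omega>) \<le> crit M In \<beta>1 + 3 * \<epsilon>}"
  have Wm: "W \<in> events" unfolding W_def using Im by measurable
  have Em: "E \<in> events" unfolding E_def using Im chat_measM by measurable
  have "E \<subseteq> {\<omega>\<in>space M. In (fst \<omega>) > u0} \<union> Bad"
  proof
    fix \<omega> assume "\<omega> \<in> E"
    then have \<omega>: "\<omega> \<in> space M" "In (fst \<omega>) > boot_crit X Uh \<beta> (fst \<omega>)" unfolding E_def by auto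
    have fd: "fst \<omega> \<in> space D" using \<omega>(1) by (auto simp: spaceM)
    show "\<omega> \<in> {\<omega>\<in>space M. In (fst \<omega>) > u0} \<union> Bad"
    proof (cases "\<omega> \<in> Bad")
      case False
      then have "G (fst \<omega>) u0 < \<beta>" using \<omega>(1) \<open>p + \<nu> < \<beta>\<close> unfolding Bad_def by auto
      then have "\<not> boot_crit X Uh \<beta> (fst \<omega>) \<le> u0" using G_quantile[OF fd, of u0] by linarith
      then show ?thesis using \<omega> by auto
    qed simp
  qed
  then have "prob E \<le> prob ({\<omega>\<in>space M. In (fst \<omega>) > u0} \<union> Bad)"
    using Em Badm Im by (intro finite_measure_mono) auto
  also have "\<dots> \<le> prob {\<omega>\<in>space M. In (fst \<omega>) > u0} + prob Bad"
    using Badm Im by (intro prob_un_le) auto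
  also have "prob {\<omega>\<in>space M. In (fst \<omega>) > u0} \<le> prob (space M - {\<omega>\<in>space M. In (fst \<omega>) \<le> c} \<union> W)"
    using Im Wm eps unfolding W_def u0_def c_def by (intro finite_measure_mono) auto
  also have "\<dots> \<le> prob (space M - {\<omega>\<in>space M. In (fst \<omega>) \<le> c}) + prob W"
    using Wm Im by (intro prob_un_le) auto
  also have "prob (space M - {\<omega>\<in>space M. In (fst \<omega>) \<le> c}) = 1 - FI c"
    unfolding FI_def using Im by (intro prob_compl) measurable
  finally show ?thesis using Fc win Bad unfolding W_def B'_def E_def by linarith
qed

lemma lower_n:
  fixes In :: "(nat \<Rightarrow> 'v) \<Rightarrow> real" and U Us R R' :: "(nat \<Rightarrow> 'v) \<times> 'a \<Rightarrow> real"
  assumes In_meas: "In \<in> borel_measurable (\<Pi>\<^sub>M i\<in>UNIV. Vsp)"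
    and U: "U \<in> borel_measurable M" and Us: "Us \<in> borel_measurable M"
    and R: "R \<in> borel_measurable M" and R': "R' \<in> borel_measurable M"
    and deq: "distr M borel Us = distr M borel U"
    and indep: "prob_space.indep_set M {Us -` B \<inter> space M | B. B \<in> sets borel}
       {(\<lambda>\<omega>. restrict (fst \<omega>) {..<n}) -` C \<inter> space M | C. C \<in> sets (\<Pi>\<^sub>M i\<in>{..<n}. Vsp)}"
    and Ieq: "\<forall>\<omega>\<in>space M. In (fst \<omega>) = U \<omega> + R \<omega>"
    and Ueq: "\<forall>\<omega>\<in>space M. Uh (fst \<omega>) (snd \<omega>) = Us \<omega> + R' \<omega>"
    and nu: "0 < \<nu>" and eps: "0 < \<epsilon>" and b2: "\<beta>2 = \<beta> + 2 * \<nu>" "\<beta>2 < 1"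
    and RB: "measure M {\<omega>\<in>space M. \<bar>R \<omega>\<bar> > \<epsilon>} \<le> \<nu>"
    and win: "measure M {\<omega>\<in>space M. crit M In \<beta>2 - 3 * \<epsilon> \<le> In (fst \<omega>) \<and>
                 In (fst \<omega>) \<le> crit M In \<beta>2 + 3 * \<epsilon>} \<le> w"
  shows "(1 - \<beta>2) - w - measure M {\<omega>\<in>space M. \<bar>R' \<omega>\<bar> > \<epsilon>} / \<nu>
          \<le> measure M {\<omega>\<in>space M. In (fst \<omega>) > boot_crit X Uh \<beta> (fst \<omega>)}"
proof -
  interpret prob_space M by (rule probM)
  have Im: "(\<lambda>\<omega>. In (fst \<omega>)) \<in> borel_measurable M" by (rule In_measM[OF In_meas])
  have b2': "0 < \<beta>2" using b2 beta nu by simp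
  define FI where "FI u = prob {\<omega>\<in>space M. In (fst \<omega>) \<le> u}" for u
  define c where "c = crit M In \<beta>2"
  have qiff: "\<beta>2 \<le> FI u \<longleftrightarrow> c \<le> u" for u
    unfolding FI_def c_def crit_def
    by (rule cdf_quantile_iff[OF Im b2' b2(2)])
  have Fc: "\<beta>2 \<le> FI c" using qiff by simp
  have Flt: "FI u < \<beta>2" if "u < c" for u using qiff[of u] that by linarith
  have Fmono: "FI x \<le> FI y" if "x \<le> y" for x y
    unfolding FI_def using Im that by (intro finite_measure_mono) auto
  define u0 where "u0 = c + 3 * \<epsilon>"
  define t where "t = c + 2 * \<epsilon>"
  define p where "p = prob {\<omega>\<in>space M. Us \<omega> \<le> t}"
  define B where "B = {\<omega>\<in>space M. \<bar>R \<omega>\<bar> > \<epsilon>}"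
  define B' where "B' = {\<omega>\<in>space M. \<bar>R' \<omega>\<bar> > \<epsilon>}"
  have Bm: "B \<in> events" unfolding B_def using R by measurable
  have B'm: "B' \<in> events" unfolding B'_def using R' by measurable
  have p_eq: "p = prob {\<omega>\<in>space M. U \<omega> \<le> t}" unfolding p_def by (rule distr_le[OF U Us deq])
  have "{\<omega>\<in>space M. In (fst \<omega>) \<le> c + \<epsilon>} \<subseteq> {\<omega>\<in>space M. U \<omega> \<le> t} \<union> B"
    using Ieq unfolding B_def t_def by force
  then have "FI (c + \<epsilon>) \<le> prob ({\<omega>\<in>space M. U \<omega> \<le> t} \<union> B)"
    unfolding FI_def using Bm U by (intro finite_measure_mono) auto
  also have "\<dots> \<le> p + prob B"
    unfolding p_eq using Bm U by (intro prob_un_le) auto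
  finally have "\<beta> \<le> p - \<nu>" using Fc Fmono[of c "c + \<epsilon>"] eps RB b2 unfolding B_def by linarith
  have sub: "{\<omega>\<in>space M. Us \<omega> \<le> t} \<subseteq> {\<omega>\<in>space M. Uh (fst \<omega>) (snd \<omega>) \<le> u0} \<union> B'"
    using Ueq unfolding B'_def u0_def t_def by force
  define Bad where "Bad = {\<omega>\<in>space M. G (fst \<omega>) u0 < p - \<nu>}"
  have Bad: "prob Bad \<le> prob B' / \<nu>"
    unfolding Bad_def p_def by (rule key_lower[OF Us indep B'm sub nu])
  have Badm: "Bad \<in> events" unfolding Bad_def using G_meas unfolding jointM_def by measurable
  define E where "E = {\<omega>\<in>space M. In (fst \<omega>) > boot_crit X Uh \<beta> (fst \<omega>)}"
  define W where "W = {\<omega>\<in>space M. crit M In \<beta>2 - 3 * \<epsilon> \<le> In (fst \<omega>) \<and>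
                 In (fst \<omega>) \<le> crit M In \<beta>2 + 3 * \<epsilon>}"
  have Wm: "W \<in> events" unfolding W_def using Im by measurable
  have Em: "E \<in> events" unfolding E_def using Im chat_measM by measurable
  have "{\<omega>\<in>space M. In (fst \<omega>) > u0} \<subseteq> E \<union> Bad"
  proof
    fix \<omega> assume "\<omega> \<in> {\<omega>\<in>space M. In (fst \<omega>) > u0}"
    then have \<omega>: "\<omega> \<in> space M" "In (fst \<omega>) > u0" by auto
    have fd: "fst \<omega> \<in> space D" using \<omega>(1) by (auto simp: spaceM)
    show "\<omega> \<in> E \<union> Bad"
    proof (cases "\<omega> \<in> Bad")
      case False
      then have "\<beta> \<le> G (fst \<omega>) u0" using \<omega>(1) \<open>\<beta> \<le> p - \<nu>\<close> unfolding Bad_def by auto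
      then have "boot_crit X Uh \<beta> (fst \<omega>) \<le> u0" using G_quantile[OF fd, of u0] by linarith
      then show ?thesis using \<omega> unfolding E_def by auto
    qed simp
  qed
  then have "prob {\<omega>\<in>space M. In (fst \<omega>) > u0} \<le> prob (E \<union> Bad)"
    using Em Badm Im by (intro finite_measure_mono) auto
  also have "\<dots> \<le> prob E + prob Bad"
    using Badm Em by (intro prob_un_le) auto
  finally have h1: "prob {\<omega>\<in>space M. In (fst \<omega>) > u0} \<le> prob E + prob Bad" .
  have "{\<omega>\<in>space M. In (fst \<omega>) > u0} = space M - {\<omega>\<in>space M. In (fst \<omega>) \<le> u0}" by auto
  then have h2: "prob {\<omega>\<in>space M. In (fst \<omega>) > u0} = 1 - FI u0"
    unfolding FI_def using Im by (simp add: prob_compl)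
  have "FI u0 \<le> prob ({\<omega>\<in>space M. In (fst \<omega>) \<le> c - 3 * \<epsilon>} \<union> W)"
    unfolding FI_def using Im Wm unfolding W_def u0_def c_def by (intro finite_measure_mono) auto
  also have "\<dots> \<le> FI (c - 3 * \<epsilon>) + prob W"
    unfolding FI_def using Wm Im by (intro prob_un_le) auto
  finally have h3: "FI u0 \<le> FI (c - 3 * \<epsilon>) + prob W" .
  have "FI (c - 3 * \<epsilon>) < \<beta>2" using Flt eps by simp
  then show ?thesis using h1 h2 h3 win Bad unfolding W_def B'_def E_def by linarith
qed

end

lemma main_parts:
  fixes \<alpha> :: real and a :: "nat \<Rightarrow> real" and P0 :: "'v measure set" and Vsp :: "'v measure"
    and A :: "'v measure \<Rightarrow> 'a measure" and Asp :: "'a measure"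
    and I :: "nat \<Rightarrow> (nat \<Rightarrow> 'v) \<Rightarrow> real" and Uhat :: "nat \<Rightarrow> (nat \<Rightarrow> 'v) \<Rightarrow> 'a \<Rightarrow> real"
    and U Us R R' :: "nat \<Rightarrow> 'v measure \<Rightarrow> (nat \<Rightarrow> 'v) \<times> 'a \<Rightarrow> real"
  assumes alpha: "0 < \<alpha>" "\<alpha> < 1"
    and a_pos: "\<forall>n. 0 < a n"
    and P0: "\<forall>P\<in>P0. prob_space P \<and> sets P = sets Vsp"
    and Aux: "\<forall>P\<in>P0. prob_space (A P) \<and> sets (A P) = sets Asp"
    and I_meas: "\<forall>n. I n \<in> borel_measurable (\<Pi>\<^sub>M i\<in>UNIV. Vsp)"
    and Uhat_meas: "\<forall>n. (\<lambda>\<omega>. Uhat n (fst \<omega>) (snd \<omega>)) \<in> borel_measurable ((\<Pi>\<^sub>M i\<in>UNIV. Vsp) \<Otimes>\<^sub>M Asp)"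
    and Uhat_data: "\<forall>n d d' x. (\<forall>i<n. d i = d' i) \<longrightarrow> Uhat n d x = Uhat n d' x"
    and anticonc: "\<exists>\<delta>>0. \<exists>r. r \<longlonglongrightarrow> 0 \<and>
        (\<forall>n \<epsilon> \<alpha>'. \<epsilon> > 0 \<longrightarrow> \<alpha> - \<delta> \<le> \<alpha>' \<longrightarrow> \<alpha>' \<le> \<alpha> + \<delta> \<longrightarrow>
          (\<forall>P\<in>P0. measure (jointM P (A P))
              {\<omega> \<in> space (jointM P (A P)).
                 crit (jointM P (A P)) (I n) (1 - \<alpha>') - \<epsilon> \<le> I n (fst \<omega>) \<and>
                 I n (fst \<omega>) \<le> crit (jointM P (A P)) (I n) (1 - \<alpha>') + \<epsilon>}
            \<le> min \<epsilon> 1 / a n + r n))"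
    and vc: "valid_copy P0 (\<lambda>P. jointM P (A P)) Vsp U Us"
    and uR: "unif_op P0 (\<lambda>P. jointM P (A P)) R a"
    and uR': "unif_op P0 (\<lambda>P. jointM P (A P)) R' a"
    and Ile: "\<forall>n. \<forall>P\<in>P0. \<forall>\<omega>\<in>space (jointM P (A P)). I n (fst \<omega>) \<le> U n P \<omega> + R n P \<omega>"
    and Uge: "\<forall>n. \<forall>P\<in>P0. \<forall>\<omega>\<in>space (jointM P (A P)). Uhat n (fst \<omega>) (snd \<omega>) \<ge> Us n P \<omega> + R' n P \<omega>"
    and eta: "\<eta> > 0"
  shows "eventually (\<lambda>n. \<forall>P\<in>P0.
            measure (jointM P (A P))
              {\<omega> \<in> space (jointM P (A P)). I n (fst \<omega>) > boot_crit (A P) (Uhat n) (1 - \<alpha>) (fst \<omega>)}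
            \<le> \<alpha> + \<eta>) sequentially"
    and "(\<forall>n. \<forall>P\<in>P0. \<forall>\<omega>\<in>space (jointM P (A P)). I n (fst \<omega>) = U n P \<omega> + R n P \<omega>) \<Longrightarrow>
         (\<forall>n. \<forall>P\<in>P0. \<forall>\<omega>\<in>space (jointM P (A P)). Uhat n (fst \<omega>) (snd \<omega>) = Us n P \<omega> + R' n P \<omega>) \<Longrightarrow>
         eventually (\<lambda>n. \<forall>P\<in>P0.
            \<alpha> - \<eta> \<le> measure (jointM P (A P))
              {\<omega> \<in> space (jointM P (A P)). I n (fst \<omega>) > boot_crit (A P) (Uhat n) (1 - \<alpha>) (fst \<omega>)}) sequentially"
proof -
  obtain \<delta> r where \<delta>: "\<delta> > 0" and r: "r \<longlonglongrightarrow> 0"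
    and ac: "\<And>n \<epsilon> \<alpha>' P. \<epsilon> > 0 \<Longrightarrow> \<alpha> - \<delta> \<le> \<alpha>' \<Longrightarrow> \<alpha>' \<le> \<alpha> + \<delta> \<Longrightarrow> P \<in> P0 \<Longrightarrow>
          measure (jointM P (A P))
              {\<omega> \<in> space (jointM P (A P)).
                 crit (jointM P (A P)) (I n) (1 - \<alpha>') - \<epsilon> \<le> I n (fst \<omega>) \<and>
                 I n (fst \<omega>) \<le> crit (jointM P (A P)) (I n) (1 - \<alpha>') + \<epsilon>}
            \<le> min \<epsilon> 1 / a n + r n"
    using anticonc by blast
  define \<nu> where "\<nu> = min (\<eta> / 8) (min (\<delta> / 2) (min ((1 - \<alpha>) / 4) (\<alpha> / 4)))"
  define \<epsilon> where "\<epsilon> = \<eta> / 12"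
  have nu: "0 < \<nu>" unfolding \<nu>_def using eta \<delta> alpha by auto
  have eps: "0 < \<epsilon>" unfolding \<epsilon>_def using eta by auto
  have nl: "\<nu> \<le> \<eta> / 8" "\<nu> \<le> \<delta> / 2" "\<nu> \<le> (1 - \<alpha>) / 4" "\<nu> \<le> \<alpha> / 4"
    unfolding \<nu>_def by (meson min.cobounded1 min.cobounded2 order_trans)+
  have nu_le: "\<nu> \<le> \<eta> / 8" "2 * \<nu> \<le> \<delta>" "2 * \<nu> < 1 - \<alpha>" "2 * \<nu> < \<alpha>"
    using nl alpha by (auto intro: add_pos_pos)
  have e1: "eventually (\<lambda>n. \<forall>P\<in>P0. measure (jointM P (A P))
        {\<omega> \<in> space (jointM P (A P)). \<bar>R n P \<omega>\<bar> > \<epsilon> * a n} \<le> \<nu>) sequentially"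
    using uR eps nu unfolding unif_op_def by blast
  have e2: "eventually (\<lambda>n. \<forall>P\<in>P0. measure (jointM P (A P))
        {\<omega> \<in> space (jointM P (A P)). \<bar>R' n P \<omega>\<bar> > \<epsilon> * a n} \<le> \<nu> * (\<eta> / 8)) sequentially"
    using uR' eps nu eta unfolding unif_op_def by (meson mult_pos_pos zero_less_divide_iff zero_less_numeral)
  have e3: "eventually (\<lambda>n. r n \<le> \<eta> / 8) sequentially"
    using order_tendstoD(2)[OF r, of "\<eta> / 8"] eta by (auto elim: eventually_mono)
  have Rm: "\<And>n P. P \<in> P0 \<Longrightarrow> R n P \<in> borel_measurable (jointM P (A P))"
    using uR unfolding unif_op_def by blast
  have R'm: "\<And>n P. P \<in> P0 \<Longrightarrow> R' n P \<in> borel_measurable (jointM P (A P))"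
    using uR' unfolding unif_op_def by blast
  have vc': "\<And>n P. P \<in> P0 \<Longrightarrow> U n P \<in> borel_measurable (jointM P (A P)) \<and> Us n P \<in> borel_measurable (jointM P (A P)) \<and>
        distr (jointM P (A P)) borel (Us n P) = distr (jointM P (A P)) borel (U n P) \<and>
        prob_space.indep_set (jointM P (A P))
            {Us n P -` B \<inter> space (jointM P (A P)) | B. B \<in> sets borel}
            {(\<lambda>\<omega>. restrict (fst \<omega>) {..<n}) -` C \<inter> space (jointM P (A P)) | C. C \<in> sets (\<Pi>\<^sub>M i\<in>{..<n}. Vsp)}"
    using vc unfolding valid_copy_def by blast
  have bs: "\<And>n P. P \<in> P0 \<Longrightarrow> boot_setup P Vsp (A P) Asp n (Uhat n) (1 - \<alpha>)"
    using P0 Aux Uhat_meas Uhat_data alpha by (intro boot_setup.intro) auto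
  have wbound: "min (3 * (\<epsilon> * a n)) 1 / a n + r n \<le> 3 * \<epsilon> + r n" for n
  proof -
    have "min (3 * (\<epsilon> * a n)) 1 / a n \<le> 3 * (\<epsilon> * a n) / a n"
      using a_pos by (intro divide_right_mono) (auto simp: less_imp_le)
    also have "\<dots> = 3 * \<epsilon>" using a_pos by (simp add: less_imp_neq[symmetric])
    finally show ?thesis by simp
  qed
  show "eventually (\<lambda>n. \<forall>P\<in>P0.
            measure (jointM P (A P))
              {\<omega> \<in> space (jointM P (A P)). I n (fst \<omega>) > boot_crit (A P) (Uhat n) (1 - \<alpha>) (fst \<omega>)}
            \<le> \<alpha> + \<eta>) sequentially"
    using e1 e2 e3
  proof eventually_elim
    case (elim n)
    show ?case
    proof
      fix P assume P: "P \<in> P0"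
      interpret boot_setup P Vsp "A P" Asp n "Uhat n" "1 - \<alpha>" by (rule bs[OF P])
      have ean: "0 < \<epsilon> * a n" using eps a_pos by simp
      have "measure M {\<omega>\<in>space M. I n (fst \<omega>) > boot_crit (A P) (Uhat n) (1 - \<alpha>) (fst \<omega>)}
          \<le> (1 - (1 - (\<alpha> + 2 * \<nu>))) + (min (3 * (\<epsilon> * a n)) 1 / a n + r n)
             + measure M {\<omega>\<in>space M. \<bar>R' n P \<omega>\<bar> > \<epsilon> * a n} / \<nu>"
        using vc'[OF P, of n] Rm[OF P, of n] R'm[OF P, of n] Ile Uge P
        by (intro upper_n[where U="U n P" and Us="Us n P" and R="R n P"]
              ac[of "3 * (\<epsilon> * a n)" "\<alpha> + 2 * \<nu>" P n, simplified] nu ean elim(1)[rule_format, OF P])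
           (use I_meas \<delta> nu nu_le ean in auto)
      also have "\<dots> \<le> \<alpha> + \<eta>"
      proof -
        have "measure M {\<omega>\<in>space M. \<bar>R' n P \<omega>\<bar> > \<epsilon> * a n} / \<nu> \<le> \<eta> / 8"
          using elim(2) P nu by (auto simp: divide_le_eq mult.commute)
        then show ?thesis using wbound[of n] elim(3) nu_le eta unfolding \<epsilon>_def by linarith
      qed
      finally show "measure M {\<omega>\<in>space M. I n (fst \<omega>) > boot_crit (A P) (Uhat n) (1 - \<alpha>) (fst \<omega>)} \<le> \<alpha> + \<eta>" .
    qed
  qed
  assume Ieq: "\<forall>n. \<forall>P\<in>P0. \<forall>\<omega>\<in>space (jointM P (A P)). I n (fst \<omega>) = U n P \<omega> + R n P \<omega>"
    and Ueq: "\<forall>n. \<forall>P\<in>P0. \<forall>\<omega>\<in>space (jointM P (A P)). Uhat n (fst \<omega>) (snd \<omega>) = Us n P \<omega> + R' n P \<omega>"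
  show "eventually (\<lambda>n. \<forall>P\<in>P0.
            \<alpha> - \<eta> \<le> measure (jointM P (A P))
              {\<omega> \<in> space (jointM P (A P)). I n (fst \<omega>) > boot_crit (A P) (Uhat n) (1 - \<alpha>) (fst \<omega>)}) sequentially"
    using e1 e2 e3
  proof eventually_elim
    case (elim n)
    show ?case
    proof
      fix P assume P: "P \<in> P0"
      interpret boot_setup P Vsp "A P" Asp n "Uhat n" "1 - \<alpha>" by (rule bs[OF P])
      have ean: "0 < \<epsilon> * a n" using eps a_pos by simp
      have "(1 - (1 - (\<alpha> - 2 * \<nu>))) - (min (3 * (\<epsilon> * a n)) 1 / a n + r n)
             - measure M {\<omega>\<in>space M. \<bar>R' n P \<omega>\<bar> > \<epsilon> * a n} / \<nu>
          \<le> measure M {\<omega>\<in>space M. I n (fst \<omega>) > boot_crit (A P) (Uhat n) (1 - \<alpha>) (fst \<omega>)}"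
        using vc'[OF P, of n] Rm[OF P, of n] R'm[OF P, of n] Ieq Ueq P
        by (intro lower_n[where U="U n P" and Us="Us n P" and R="R n P"]
              ac[of "3 * (\<epsilon> * a n)" "\<alpha> - 2 * \<nu>" P n, simplified] nu ean elim(1)[rule_format, OF P])
           (use I_meas \<delta> nu nu_le ean in auto)
      moreover have "\<alpha> - \<eta> \<le> (1 - (1 - (\<alpha> - 2 * \<nu>))) - (min (3 * (\<epsilon> * a n)) 1 / a n + r n)
             - measure M {\<omega>\<in>space M. \<bar>R' n P \<omega>\<bar> > \<epsilon> * a n} / \<nu>"
      proof -
        have "measure M {\<omega>\<in>space M. \<bar>R' n P \<omega>\<bar> > \<epsilon> * a n} / \<nu> \<le> \<eta> / 8"
          using elim(2) P nu by (auto simp: divide_le_eq mult.commute)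
        then show ?thesis using wbound[of n] elim(3) nu_le eta unfolding \<epsilon>_def by linarith
      qed
      ultimately show "\<alpha> - \<eta> \<le> measure M {\<omega>\<in>space M. I n (fst \<omega>) > boot_crit (A P) (Uhat n) (1 - \<alpha>) (fst \<omega>)}"
        by linarith
    qed
  qed
qed

theorem lemmaD6:
  fixes \<alpha> :: real and a :: "nat \<Rightarrow> real" and P0 :: "'v measure set" and Vsp :: "'v measure"
    and A :: "'v measure \<Rightarrow> 'a measure" and Asp :: "'a measure"
    and I :: "nat \<Rightarrow> (nat \<Rightarrow> 'v) \<Rightarrow> real" and Uhat :: "nat \<Rightarrow> (nat \<Rightarrow> 'v) \<Rightarrow> 'a \<Rightarrow> real"
  assumes alpha: "0 < \<alpha>" "\<alpha> < 1"
    and a_pos: "\<forall>n. 0 < a n"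
    and P0: "\<forall>P\<in>P0. prob_space P \<and> sets P = sets Vsp"
    and Aux: "\<forall>P\<in>P0. prob_space (A P) \<and> sets (A P) = sets Asp"
    and I_meas: "\<forall>n. I n \<in> borel_measurable (\<Pi>\<^sub>M i\<in>UNIV. Vsp)"
    and I_data: "\<forall>n d d'. (\<forall>i<n. d i = d' i) \<longrightarrow> I n d = I n d'"
    and Uhat_meas: "\<forall>n. (\<lambda>\<omega>. Uhat n (fst \<omega>) (snd \<omega>)) \<in> borel_measurable ((\<Pi>\<^sub>M i\<in>UNIV. Vsp) \<Otimes>\<^sub>M Asp)"
    and Uhat_data: "\<forall>n d d' x. (\<forall>i<n. d i = d' i) \<longrightarrow> Uhat n d x = Uhat n d' x"
    and anticonc: "\<exists>\<delta>>0. \<exists>r. r \<longlonglongrightarrow> 0 \<and>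
        (\<forall>n \<epsilon> \<alpha>'. \<epsilon> > 0 \<longrightarrow> \<alpha> - \<delta> \<le> \<alpha>' \<longrightarrow> \<alpha>' \<le> \<alpha> + \<delta> \<longrightarrow>
          (\<forall>P\<in>P0. measure (jointM P (A P))
              {\<omega> \<in> space (jointM P (A P)).
                 crit (jointM P (A P)) (I n) (1 - \<alpha>') - \<epsilon> \<le> I n (fst \<omega>) \<and>
                 I n (fst \<omega>) \<le> crit (jointM P (A P)) (I n) (1 - \<alpha>') + \<epsilon>}
            \<le> min \<epsilon> 1 / a n + r n))"
  shows
   "(\<forall>U Ustar.
       valid_copy P0 (\<lambda>P. jointM P (A P)) Vsp U Ustar \<and>
       (\<exists>R. unif_op P0 (\<lambda>P. jointM P (A P)) R a \<and>
            (\<forall>n. \<forall>P\<in>P0. \<forall>\<omega>\<in>space (jointM P (A P)). I n (fst \<omega>) \<le> U n P \<omega> + R n P \<omega>)) \<and>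
       (\<exists>R. unif_op P0 (\<lambda>P. jointM P (A P)) R a \<and>
            (\<forall>n. \<forall>P\<in>P0. \<forall>\<omega>\<in>space (jointM P (A P)).
                Uhat n (fst \<omega>) (snd \<omega>) \<ge> Ustar n P \<omega> + R n P \<omega>))
     \<longrightarrow> (\<forall>\<eta>>0. eventually (\<lambda>n. \<forall>P\<in>P0.
            measure (jointM P (A P))
              {\<omega> \<in> space (jointM P (A P)). I n (fst \<omega>) > boot_crit (A P) (Uhat n) (1 - \<alpha>) (fst \<omega>)}
            \<le> \<alpha> + \<eta>) sequentially))
    \<and>
    (\<forall>U Ustar.
       valid_copy P0 (\<lambda>P. jointM P (A P)) Vsp U Ustar \<and>
       (\<exists>R. unif_op P0 (\<lambda>P. jointM P (A P)) R a \<and>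
            (\<forall>n. \<forall>P\<in>P0. \<forall>\<omega>\<in>space (jointM P (A P)). I n (fst \<omega>) = U n P \<omega> + R n P \<omega>)) \<and>
       (\<exists>R. unif_op P0 (\<lambda>P. jointM P (A P)) R a \<and>
            (\<forall>n. \<forall>P\<in>P0. \<forall>\<omega>\<in>space (jointM P (A P)).
                Uhat n (fst \<omega>) (snd \<omega>) = Ustar n P \<omega> + R n P \<omega>))
     \<longrightarrow> (\<forall>\<eta>>0. eventually (\<lambda>n. \<forall>P\<in>P0.
            \<bar>measure (jointM P (A P))
              {\<omega> \<in> space (jointM P (A P)). I n (fst \<omega>) > boot_crit (A P) (Uhat n) (1 - \<alpha>) (fst \<omega>)}
             - \<alpha>\<bar> \<le> \<eta>) sequentially))"
  proof (intro conjI allI impI)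
  fix U Ustar
  assume H: "valid_copy P0 (\<lambda>P. jointM P (A P)) Vsp U Ustar \<and>
       (\<exists>R. unif_op P0 (\<lambda>P. jointM P (A P)) R a \<and>
            (\<forall>n. \<forall>P\<in>P0. \<forall>\<omega>\<in>space (jointM P (A P)). I n (fst \<omega>) \<le> U n P \<omega> + R n P \<omega>)) \<and>
       (\<exists>R. unif_op P0 (\<lambda>P. jointM P (A P)) R a \<and>
            (\<forall>n. \<forall>P\<in>P0. \<forall>\<omega>\<in>space (jointM P (A P)).
                Uhat n (fst \<omega>) (snd \<omega>) \<ge> Ustar n P \<omega> + R n P \<omega>))"
  then obtain R R' where vc: "valid_copy P0 (\<lambda>P. jointM P (A P)) Vsp U Ustar"
    and uR: "unif_op P0 (\<lambda>P. jointM P (A P)) R a"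
    and Ile: "\<forall>n. \<forall>P\<in>P0. \<forall>\<omega>\<in>space (jointM P (A P)). I n (fst \<omega>) \<le> U n P \<omega> + R n P \<omega>"
    and uR': "unif_op P0 (\<lambda>P. jointM P (A P)) R' a"
    and Uge: "\<forall>n. \<forall>P\<in>P0. \<forall>\<omega>\<in>space (jointM P (A P)). Uhat n (fst \<omega>) (snd \<omega>) \<ge> Ustar n P \<omega> + R' n P \<omega>"
    by blast
  fix \<eta> :: real assume eta: "\<eta> > 0"
  show "eventually (\<lambda>n. \<forall>P\<in>P0.
            measure (jointM P (A P))
              {\<omega> \<in> space (jointM P (A P)). I n (fst \<omega>) > boot_crit (A P) (Uhat n) (1 - \<alpha>) (fst \<omega>)}
            \<le> \<alpha> + \<eta>) sequentially"
    by (rule main_parts(1)[OF alpha a_pos P0 Aux I_meas Uhat_meas Uhat_data anticonc vc uR uR' Ile Uge eta])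
next
  fix U Ustar
  assume H: "valid_copy P0 (\<lambda>P. jointM P (A P)) Vsp U Ustar \<and>
       (\<exists>R. unif_op P0 (\<lambda>P. jointM P (A P)) R a \<and>
            (\<forall>n. \<forall>P\<in>P0. \<forall>\<omega>\<in>space (jointM P (A P)). I n (fst \<omega>) = U n P \<omega> + R n P \<omega>)) \<and>
       (\<exists>R. unif_op P0 (\<lambda>P. jointM P (A P)) R a \<and>
            (\<forall>n. \<forall>P\<in>P0. \<forall>\<omega>\<in>space (jointM P (A P)).
                Uhat n (fst \<omega>) (snd \<omega>) = Ustar n P \<omega> + R n P \<omega>))"
  then obtain R R' where vc: "valid_copy P0 (\<lambda>P. jointM P (A P)) Vsp U Ustar"
    and uR: "unif_op P0 (\<lambda>P. jointM P (A P)) R a"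
    and Ieq: "\<forall>n. \<forall>P\<in>P0. \<forall>\<omega>\<in>space (jointM P (A P)). I n (fst \<omega>) = U n P \<omega> + R n P \<omega>"
    and uR': "unif_op P0 (\<lambda>P. jointM P (A P)) R' a"
    and Ueq: "\<forall>n. \<forall>P\<in>P0. \<forall>\<omega>\<in>space (jointM P (A P)). Uhat n (fst \<omega>) (snd \<omega>) = Ustar n P \<omega> + R' n P \<omega>"
    by blast
  have Ile: "\<forall>n. \<forall>P\<in>P0. \<forall>\<omega>\<in>space (jointM P (A P)). I n (fst \<omega>) \<le> U n P \<omega> + R n P \<omega>"
    using Ieq by simp
  have Uge: "\<forall>n. \<forall>P\<in>P0. \<forall>\<omega>\<in>space (jointM P (A P)). Uhat n (fst \<omega>) (snd \<omega>) \<ge> Ustar n P \<omega> + R' n P \<omega>"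
    using Ueq by simp
    fix \<eta> :: real assume eta: "\<eta> > 0"
    note mp = main_parts[OF alpha a_pos P0 Aux I_meas Uhat_meas Uhat_data anticonc vc uR uR' Ile Uge eta]
    show "eventually (\<lambda>n. \<forall>P\<in>P0.
            \<bar>measure (jointM P (A P))
              {\<omega> \<in> space (jointM P (A P)). I n (fst \<omega>) > boot_crit (A P) (Uhat n) (1 - \<alpha>) (fst \<omega>)}
             - \<alpha>\<bar> \<le> \<eta>) sequentially"
      using mp(1) mp(2)[OF Ieq Ueq]
      by eventually_elim (auto simp: abs_le_iff)
qed

end
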